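(* Let $n=2p$ and let $B$ be a skew-symmetric $n\times n$ matrix such that $JB$ is a regular skew-Hamiltonian matrix. Then $$\{JA:\ A\in\Lambda^2V,\ [JA,JB]=0\}=\langle (JB)^k:\ k=0,\dots,p-1\rangle,$$ and this space has dimension $p=n/2$.
   Context: $V=\mathbb C^n$, $n=2p$, $\Lambda^2V$ (resp. $S^2V$) = skew-symmetric (resp. symmetric) $n\times n$ complex matrices, $J=\begin{bmatrix}0&I_p\\-I_p&0\end{bmatrix}$, $[X,Y]=XY-YX$. A matrix $W$ is skew-Hamiltonian if $JW={}^tWJ$, equivalently $W=JB$ with $B$ skew-symmetric. Every skew-Hamiltonian $W$ is conjugate by a symplectic matrix $M\in\mathrm{Sp}(n)$ to a matrix $\begin{bmatrix}P&0\\0&{}^tP\end{bmatrix}$ with $P$ a $p\times p$ matrix; $W$ is called regular if the minimal polynomial of such a $P$ has degree $p$ (i.e. equals its characteristic polynomial). *)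

theory Defs
  imports "Jordan_Normal_Form.VS_Connect"
begin

definition J_mat :: "nat \<Rightarrow> complex mat" where
  "J_mat p = four_block_mat (0\<^sub>m p p) (1\<^sub>m p) (- 1\<^sub>m p) (0\<^sub>m p p)"

definition skew_symmetric :: "complex mat \<Rightarrow> bool" where
  "skew_symmetric A \<longleftrightarrow> transpose_mat A = - A"

definition skew_hamiltonian :: "nat \<Rightarrow> complex mat \<Rightarrow> bool" where
  "skew_hamiltonian p W \<longleftrightarrow> W \<in> carrier_mat (2*p) (2*p) \<and>
     J_mat p * W = transpose_mat W * J_mat p"

definition symplectic :: "nat \<Rightarrow> complex mat \<Rightarrow> bool" where
  "symplectic p M \<longleftrightarrow> M \<in> carrier_mat (2*p) (2*p) \<and>
     transpose_mat M * J_mat p * M = J_mat p"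

definition poly_mat_eval :: "nat \<Rightarrow> complex poly \<Rightarrow> complex mat \<Rightarrow> complex mat" where
  "poly_mat_eval m q P = foldr (\<lambda>c M. c \<cdot>\<^sub>m 1\<^sub>m m + P * M) (coeffs q) (0\<^sub>m m m)"

definition minimal_polynomial :: "nat \<Rightarrow> complex mat \<Rightarrow> complex poly \<Rightarrow> bool" where
  "minimal_polynomial m P q \<longleftrightarrow> lead_coeff q = 1 \<and> poly_mat_eval m q P = 0\<^sub>m m m \<and>
     (\<forall>r. r \<noteq> 0 \<longrightarrow> poly_mat_eval m r P = 0\<^sub>m m m \<longrightarrow> degree q \<le> degree r)"

definition regular_skew_ham :: "nat \<Rightarrow> complex mat \<Rightarrow> bool" where
  "regular_skew_ham p W \<longleftrightarrow> skew_hamiltonian p W \<and>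
     (\<exists>M Minv P q. symplectic p M \<and> P \<in> carrier_mat p p \<and>
        similar_mat_wit W (four_block_mat P (0\<^sub>m p p) (0\<^sub>m p p) (transpose_mat P)) M Minv \<and>
        minimal_polynomial p P q \<and> degree q = p)"

end

theory Submission
  imports Defs "HOL-Computational_Algebra.Polynomial_Factorial" "HOL-Computational_Algebra.Field_as_Ring"
    "Jordan_Normal_Form.DL_Rank"
begin


abbreviation pme where "pme \<equiv> poly_mat_eval"

lemma foldr_carrier: "Q \<in> carrier_mat m m \<Longrightarrow>
  foldr (\<lambda>c M. c \<cdot>\<^sub>m 1\<^sub>m m + Q * M) cs (0\<^sub>m m m) \<in> carrier_mat m m"
  by (induct cs) auto

lemma pme_carrier[simp]: "Q \<in> carrier_mat m m \<Longrightarrow> pme m f Q \<in> carrier_mat m m"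
  unfolding poly_mat_eval_def by (rule foldr_carrier)

lemma pme_dims[simp]: "Q \<in> carrier_mat m m \<Longrightarrow> dim_row (pme m f Q) = m"
  "Q \<in> carrier_mat m m \<Longrightarrow> dim_col (pme m f Q) = m"
  by (metis carrier_matD pme_carrier)+

lemma smult_zero_one_mat[simp]: "(0::'a::comm_ring_1) \<cdot>\<^sub>m 1\<^sub>m m = 0\<^sub>m m m"
  by (rule eq_matI) auto

lemma one_smult_mat'[simp]: "(1::'a::comm_ring_1) \<cdot>\<^sub>m A = A"
  by (rule eq_matI) auto

lemma zero_smult_mat'[simp]: "(0::'a::comm_ring_1) \<cdot>\<^sub>m A = 0\<^sub>m (dim_row A) (dim_col A)"
  by (rule eq_matI) auto

lemma smult_smult_mat[simp]: "(a::'a::comm_ring_1) \<cdot>\<^sub>m (b \<cdot>\<^sub>m A) = (a * b) \<cdot>\<^sub>m A"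
  by (rule eq_matI) auto

lemma pme_0[simp]: "pme m 0 Q = 0\<^sub>m m m"
  unfolding poly_mat_eval_def by simp

lemma pme_pCons: assumes Q: "Q \<in> carrier_mat m m"
  shows "pme m (pCons c a) Q = c \<cdot>\<^sub>m 1\<^sub>m m + Q * pme m a Q"
proof (cases "a = 0 \<and> c = 0")
  case True
  then show ?thesis using Q by auto
next
  case False
  then have "coeffs (pCons c a) = c # coeffs a"
    by (auto simp: coeffs_pCons_eq_cCons cCons_def)
  then show ?thesis unfolding poly_mat_eval_def by simp
qed



lemma pme_add: assumes Q: "Q \<in> carrier_mat m m"
  shows "pme m (f + g) Q = pme m f Q + pme m g Q"
proof (induct f g rule: poly_induct2)
  case 0 then show ?case using Q by simp
next
  case (pCons a p b q)
  have "pme m (pCons a p + pCons b q) Q = pme m (pCons (a+b) (p+q)) Q" by simp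
  also have "\<dots> = (a+b) \<cdot>\<^sub>m 1\<^sub>m m + (Q * pme m p Q + Q * pme m q Q)"
    using Q pCons by (simp add: pme_pCons mult_add_distrib_mat[OF Q pme_carrier[OF Q] pme_carrier[OF Q]])
  also have "\<dots> = pme m (pCons a p) Q + pme m (pCons b q) Q"
    using Q by (simp add: pme_pCons, intro eq_matI, auto simp: algebra_simps)
  finally show ?case .
qed

lemma pme_smult: assumes Q: "Q \<in> carrier_mat m m"
  shows "pme m (Polynomial.smult c f) Q = c \<cdot>\<^sub>m pme m f Q"
proof (induct f)
  case 0 then show ?case by simp
next
  case (pCons a p)
  have "pme m (Polynomial.smult c (pCons a p)) Q = (c*a) \<cdot>\<^sub>m 1\<^sub>m m + Q * (c \<cdot>\<^sub>m pme m p Q)"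
    using Q pCons by (simp add: pme_pCons)
  also have "\<dots> = c \<cdot>\<^sub>m pme m (pCons a p) Q"
    using Q by (simp add: pme_pCons mult_smult_distrib[OF Q pme_carrier[OF Q]] add_smult_distrib_left_mat[of _ m m]
       smult_smult_mat)
  finally show ?case .
qed

lemma pme_pCons0: assumes Q: "Q \<in> carrier_mat m m"
  shows "pme m (pCons 0 f) Q = Q * pme m f Q"
  using Q by (simp add: pme_pCons left_add_zero_mat[of _ m m])

lemma pme_mult: assumes Q: "Q \<in> carrier_mat m m"
  shows "pme m (f * g) Q = pme m f Q * pme m g Q"
proof (induct f)
  case 0 then show ?case using Q by (simp add: left_mult_zero_mat[of _ m m])
next
  case (pCons a p)
  have "pme m (pCons a p * g) Q = pme m (Polynomial.smult a g + pCons 0 (p * g)) Q" by simp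
  also have "\<dots> = a \<cdot>\<^sub>m pme m g Q + Q * (pme m p Q * pme m g Q)"
    using Q pCons by (simp add: pme_add pme_smult pme_pCons0)
  also have "\<dots> = (a \<cdot>\<^sub>m 1\<^sub>m m + Q * pme m p Q) * pme m g Q"
  proof -
    have P: "pme m p Q \<in> carrier_mat m m" and G: "pme m g Q \<in> carrier_mat m m" using Q by auto
    have "(a \<cdot>\<^sub>m 1\<^sub>m m + Q * pme m p Q) * pme m g Q = (a \<cdot>\<^sub>m 1\<^sub>m m) * pme m g Q + (Q * pme m p Q) * pme m g Q"
      by (rule add_mult_distrib_mat[OF _ _ G], insert Q P, auto)
    also have "(a \<cdot>\<^sub>m 1\<^sub>m m) * pme m g Q = a \<cdot>\<^sub>m pme m g Q"
      using mult_smult_assoc_mat[OF one_carrier_mat G] G by simp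
    also have "(Q * pme m p Q) * pme m g Q = Q * (pme m p Q * pme m g Q)"
      by (rule assoc_mult_mat[OF Q P G])
    finally show ?thesis by simp
  qed
  finally show ?case using Q by (simp add: pme_pCons)
qed

lemma pme_const[simp]: assumes Q: "Q \<in> carrier_mat m m"
  shows "pme m [:c:] Q = c \<cdot>\<^sub>m 1\<^sub>m m"
  using Q by (simp add: pme_pCons)

lemma pme_x: assumes Q: "Q \<in> carrier_mat m m"
  shows "pme m [:0,1:] Q = Q"
  using Q by (simp add: pme_pCons left_add_zero_mat[of _ m m])

lemma pow_mat_comm: assumes Q: "Q \<in> carrier_mat m m"
  shows "Q * Q ^\<^sub>m k = Q ^\<^sub>m k * Q"
proof (induct k)
  case 0 then show ?case using Q by simp
next
  case (Suc k)
  have "Q * Q ^\<^sub>m Suc k = (Q * Q ^\<^sub>m k) * Q" using Q by (simp add: assoc_mult_mat[OF Q pow_carrier_mat[OF Q] Q])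
  also have "\<dots> = Q ^\<^sub>m Suc k * Q" using Suc by simp
  finally show ?case .
qed

lemma pme_power: assumes Q: "Q \<in> carrier_mat m m"
  shows "pme m ([:0,1:]^k) Q = Q ^\<^sub>m k"
proof (induct k)
  case 0 then show ?case using Q by (simp add: one_pCons)
next
  case (Suc k)
  then show ?case using Q
    by (simp add: pme_pCons0 pow_mat_comm)
qed



lemma transpose_smult_one[simp]: "transpose_mat (a \<cdot>\<^sub>m 1\<^sub>m m) = a \<cdot>\<^sub>m 1\<^sub>m m"
  by (rule eq_matI) auto

lemma sq_mult_add: "A \<in> carrier_mat m m \<Longrightarrow> B \<in> carrier_mat m m \<Longrightarrow> C \<in> carrier_mat m m \<Longrightarrow>
  A * (B + C) = A * B + A * C" by (rule mult_add_distrib_mat)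
lemma sq_add_mult: "A \<in> carrier_mat m m \<Longrightarrow> B \<in> carrier_mat m m \<Longrightarrow> C \<in> carrier_mat m m \<Longrightarrow>
  (A + B) * C = A * C + B * C" by (rule add_mult_distrib_mat)
lemma sq_tr_add: "A \<in> carrier_mat m m \<Longrightarrow> B \<in> carrier_mat m m \<Longrightarrow>
  transpose_mat (A + B) = transpose_mat A + transpose_mat B" by (rule transpose_add)
lemma sq_tr_mult: "(A::complex mat) \<in> carrier_mat m m \<Longrightarrow> B \<in> carrier_mat m m \<Longrightarrow>
  transpose_mat (A * B) = transpose_mat B * transpose_mat A" by (rule transpose_mult)
lemma sq_assoc: "A \<in> carrier_mat m m \<Longrightarrow> B \<in> carrier_mat m m \<Longrightarrow> C \<in> carrier_mat m m \<Longrightarrow>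
  (A * B) * C = A * (B * C)" by (rule assoc_mult_mat)

lemma mult_smult_one_right[simp]: assumes A: "(A::complex mat) \<in> carrier_mat n m" shows "A * (a \<cdot>\<^sub>m 1\<^sub>m m) = a \<cdot>\<^sub>m A"
  using mult_smult_distrib[OF A one_carrier_mat, of a] right_mult_one_mat[OF A] by simp
lemma mult_smult_one_left[simp]: assumes A: "(A::complex mat) \<in> carrier_mat n m" shows "(a \<cdot>\<^sub>m 1\<^sub>m n) * A = a \<cdot>\<^sub>m A"
  using mult_smult_assoc_mat[OF one_carrier_mat A, of a] left_mult_one_mat[OF A] by simp

lemma pme_monom: assumes Q: "Q \<in> carrier_mat m m"
  shows "pme m (monom c k) Q = c \<cdot>\<^sub>m Q ^\<^sub>m k"
  using Q by (simp add: monom_altdef pme_smult pme_power)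

lemma pme_comm: assumes Q: "Q \<in> carrier_mat m m"
  shows "pme m f Q * pme m g Q = pme m g Q * pme m f Q"
proof -
  have "pme m (f * g) Q = pme m (g * f) Q" by (simp add: mult.commute)
  then show ?thesis using pme_mult[OF Q, of f g] pme_mult[OF Q, of g f] by simp
qed

lemma pme_commute: assumes Q: "Q \<in> carrier_mat m m" and X: "X \<in> carrier_mat m m"
  and c: "X * Q = Q * X"
  shows "X * pme m f Q = pme m f Q * X"
proof (induct f)
  case 0 then show ?case using Q X by simp
next
  case (pCons a p)
  have P: "pme m p Q \<in> carrier_mat m m" using Q by simp
  have "X * pme m (pCons a p) Q = X * (a \<cdot>\<^sub>m 1\<^sub>m m) + X * (Q * pme m p Q)"
    using Q X P by (simp add: pme_pCons sq_mult_add[of X m])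
  also have "X * (a \<cdot>\<^sub>m 1\<^sub>m m) = (a \<cdot>\<^sub>m 1\<^sub>m m) * X"
    using X by simp
  also have "X * (Q * pme m p Q) = Q * (pme m p Q * X)"
  proof -
    have "X * (Q * pme m p Q) = (X * Q) * pme m p Q" using sq_assoc[OF X Q P] by simp
    also have "\<dots> = Q * (X * pme m p Q)" using c sq_assoc[OF Q X P] by simp
    also have "\<dots> = Q * (pme m p Q * X)" using pCons by simp
    finally show ?thesis .
  qed
  also have "(a \<cdot>\<^sub>m 1\<^sub>m m) * X + Q * (pme m p Q * X) = pme m (pCons a p) Q * X"
    using X Q P by (simp add: pme_pCons sq_add_mult[of _ m] sq_assoc[OF Q P X])
  finally show ?case .
qed

lemma pme_transpose: assumes Q: "Q \<in> carrier_mat m m"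
  shows "pme m f (transpose_mat Q) = transpose_mat (pme m f Q)"
proof (induct f)
  case 0 then show ?case by simp
next
  case (pCons a p)
  have P: "pme m p Q \<in> carrier_mat m m" using Q by simp
  have "transpose_mat (pme m (pCons a p) Q) = a \<cdot>\<^sub>m 1\<^sub>m m + transpose_mat (pme m p Q) * transpose_mat Q"
    using Q P by (simp add: pme_pCons sq_tr_add[of _ m] sq_tr_mult[of _ m])
  also have "transpose_mat (pme m p Q) * transpose_mat Q = transpose_mat (Q * pme m p Q)"
    using Q P by (simp add: sq_tr_mult[of _ m])
  also have "Q * pme m p Q = pme m p Q * Q"
    using pme_commute[OF Q Q refl] by simp
  also have "transpose_mat (pme m p Q * Q) = transpose_mat Q * transpose_mat (pme m p Q)"
    using Q P by (simp add: sq_tr_mult[of _ m])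
  finally show ?case using Q pCons by (simp add: pme_pCons)
qed



lemma sq_mult_carrier[simp]: "A \<in> carrier_mat m m \<Longrightarrow> B \<in> carrier_mat m m \<Longrightarrow> A * B \<in> carrier_mat m m"
  by auto
lemma sq_add_carrier[simp]: "A \<in> carrier_mat m m \<Longrightarrow> B \<in> carrier_mat m m \<Longrightarrow> A + B \<in> carrier_mat m m"
  by auto

lemma pme_similar: assumes M: "M \<in> carrier_mat m m" and Mi: "Mi \<in> carrier_mat m m"
  and D: "D \<in> carrier_mat m m" and inv1: "M * Mi = 1\<^sub>m m" and inv2: "Mi * M = 1\<^sub>m m"
  shows "pme m f (M * D * Mi) = M * pme m f D * Mi"
proof (induct f)
  case 0 then show ?case using M Mi by simp
next
  case (pCons c a)
  let ?A = "M * D * Mi"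
  have A: "?A \<in> carrier_mat m m" using M Mi D by simp
  have P: "pme m a D \<in> carrier_mat m m" using D by simp
  have cancel: "Mi * (M * X) = X" if X: "X \<in> carrier_mat m m" for X
    using sq_assoc[OF Mi M X, symmetric] inv2 X by simp
  have "pme m (pCons c a) ?A = c \<cdot>\<^sub>m 1\<^sub>m m + ?A * (M * pme m a D * Mi)"
    using A pCons by (simp add: pme_pCons)
  also have "?A * (M * pme m a D * Mi) = M * (D * (pme m a D * Mi))"
    using M Mi D P by (simp add: sq_assoc[where m=m] cancel)
  also have "c \<cdot>\<^sub>m 1\<^sub>m m = M * (c \<cdot>\<^sub>m Mi)"
    using M Mi inv1 mult_smult_distrib[OF M Mi, of c] by simp
  also have "M * (c \<cdot>\<^sub>m Mi) + M * (D * (pme m a D * Mi)) = M * (c \<cdot>\<^sub>m Mi + D * (pme m a D * Mi))"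
    using M Mi D P by (simp add: sq_mult_add[where m=m])
  also have "c \<cdot>\<^sub>m Mi + D * (pme m a D * Mi) = (c \<cdot>\<^sub>m 1\<^sub>m m + D * pme m a D) * Mi"
    using M Mi D P by (simp add: sq_add_mult[where m=m] sq_assoc[where m=m])
  finally show ?case using D M Mi P by (simp add: pme_pCons sq_assoc[where m=m])
qed

lemma pme_four_block: assumes A: "A \<in> carrier_mat p p" and B: "B \<in> carrier_mat p p"
  shows "pme (p+p) f (four_block_mat A (0\<^sub>m p p) (0\<^sub>m p p) B) =
    four_block_mat (pme p f A) (0\<^sub>m p p) (0\<^sub>m p p) (pme p f B)"
proof (induct f)
  case 0 then show ?case by simp
next
  case (pCons c a)
  let ?D = "four_block_mat A (0\<^sub>m p p) (0\<^sub>m p p) B"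
  have D: "?D \<in> carrier_mat (p+p) (p+p)" using A B by simp
  have PA: "pme p a A \<in> carrier_mat p p" and PB: "pme p a B \<in> carrier_mat p p" using A B by auto
  have "pme (p+p) (pCons c a) ?D = c \<cdot>\<^sub>m 1\<^sub>m (p+p) + ?D * four_block_mat (pme p a A) (0\<^sub>m p p) (0\<^sub>m p p) (pme p a B)"
    using D pCons by (simp add: pme_pCons)
  also have "?D * four_block_mat (pme p a A) (0\<^sub>m p p) (0\<^sub>m p p) (pme p a B) =
     four_block_mat (A * pme p a A) (0\<^sub>m p p) (0\<^sub>m p p) (B * pme p a B)"
    by (subst mult_four_block_mat[OF A _ _ B PA _ _ PB], insert A B PA PB, auto)
  also have "1\<^sub>m (p+p) = four_block_mat (1\<^sub>m p) (0\<^sub>m p p) (0\<^sub>m p p) (1\<^sub>m p)" by simp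
  also have "c \<cdot>\<^sub>m four_block_mat (1\<^sub>m p) (0\<^sub>m p p) (0\<^sub>m p p) (1\<^sub>m p) +
      four_block_mat (A * pme p a A) (0\<^sub>m p p) (0\<^sub>m p p) (B * pme p a B) =
      four_block_mat (c \<cdot>\<^sub>m 1\<^sub>m p + A * pme p a A) (0\<^sub>m p p) (0\<^sub>m p p) (c \<cdot>\<^sub>m 1\<^sub>m p + B * pme p a B)"
    by (subst smult_four_block_mat, auto, subst add_four_block_mat, insert A B PA PB, auto)
  finally show ?case using A B by (simp add: pme_pCons)
qed



lemma mat_finsum_index:
  assumes i: "i < n" and j: "j < n"
    and f: "f \<in> A \<rightarrow> carrier_mat n n"
  shows "finsum (module_mat TYPE(complex) n n) f A $$ (i,j) = sum (\<lambda>x. f x $$ (i,j)) A"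
  using f
proof (induct A rule: infinite_finite_induct)
  case (infinite A)
  interpret V: matrix_vs n n "TYPE(complex)" .
  show ?case using infinite i j by (simp add: V.finsum_infinite)
next
  case empty
  interpret V: matrix_vs n n "TYPE(complex)" .
  show ?case using i j by simp
next
  case (insert x X)
  interpret V: matrix_vs n n "TYPE(complex)" .
  have Xf: "finite X" and xX: "x \<notin> X" and fx: "f x \<in> carrier_mat n n"
    and fX: "f \<in> X \<rightarrow> carrier_mat n n" using insert by auto
  have c: "finsum (module_mat TYPE(complex) n n) f X \<in> carrier_mat n n"
    using V.finsum_closed[OF fX] by simp
  show ?case
    unfolding V.finsum_insert[OF Xf xX fX fx] sum.insert[OF Xf xX]
    using insert(3)[OF fX] c fx i j by simp
qed

lemma lincomb_index:
  assumes i: "i < n" and j: "j < n" and A: "A \<subseteq> carrier_mat n n"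
  shows "module.lincomb (module_mat TYPE(complex) n n) a A $$ (i,j) = (\<Sum>x\<in>A. a x * x $$ (i,j))"
proof -
  interpret V: matrix_vs n n "TYPE(complex)" .
  show ?thesis unfolding V.lincomb_def
    by (subst mat_finsum_index[OF i j], insert A i j, auto intro!: sum.cong)
qed

lemma poly_as_sum_lt: assumes "\<forall>k\<ge>N. coeff f k = 0"
  shows "f = (\<Sum>k<N. monom (coeff f k) k)"
proof (rule poly_eqI)
  fix n
  show "coeff f n = coeff (\<Sum>k<N. monom (coeff f k) k) n"
    using assms by (auto simp: coeff_sum coeff_monom)
qed

lemma pme_sum_index: assumes Q: "Q \<in> carrier_mat m m" and i: "i < m" and j: "j < m"
  shows "pme m (sum g I) Q $$ (i,j) = (\<Sum>k\<in>I. pme m (g k) Q $$ (i,j))"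
proof (induct I rule: infinite_finite_induct)
  case (insert x F)
  then show ?case using Q i j by (simp add: pme_add)
qed (insert i j, auto)

lemma pme_index: assumes Q: "Q \<in> carrier_mat m m" and i: "i < m" and j: "j < m"
  and f: "\<forall>k\<ge>N. coeff f k = 0"
  shows "pme m f Q $$ (i,j) = (\<Sum>k<N. coeff f k * (Q ^\<^sub>m k) $$ (i,j))"
proof -
  have "pme m f Q = pme m (\<Sum>k<N. monom (coeff f k) k) Q" using poly_as_sum_lt[OF f] by simp
  then show ?thesis using Q i j by (simp add: pme_sum_index pme_monom)
qed



lemma mult_mat_vec_zero_right[simp]: "A \<in> carrier_mat n m \<Longrightarrow> A *\<^sub>v 0\<^sub>v m = (0\<^sub>v n :: complex vec)"
  by (intro eq_vecI) auto

lemma mult_zero_mat_vec[simp]: "v \<in> carrier_vec m \<Longrightarrow> 0\<^sub>m n m *\<^sub>v v = (0\<^sub>v n :: complex vec)"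
  by (intro eq_vecI) (auto simp: scalar_prod_def)

lemma nonzero_mat_entry: assumes A: "A \<in> carrier_mat m m" and "A \<noteq> 0\<^sub>m m m"
  shows "\<exists>i j. i < m \<and> j < m \<and> A $$ (i,j) \<noteq> 0"
proof (rule ccontr)
  assume "\<not> ?thesis"
  then have "A = 0\<^sub>m m m" using A by (intro eq_matI) auto
  then show False using assms by simp
qed

lemma avoid_kernels: assumes F: "finite F" and FA: "\<And>A. A \<in> F \<Longrightarrow> A \<in> carrier_mat m m \<and> A \<noteq> 0\<^sub>m m m"
  shows "\<exists>v \<in> carrier_vec m. \<forall>A\<in>F. A *\<^sub>v v \<noteq> (0\<^sub>v m :: complex vec)"
proof -
  define vt where "vt = (\<lambda>t::complex. vec m (\<lambda>l. t ^ l))"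
  define Z where "Z = (\<lambda>A. {t. A *\<^sub>v vt t = 0\<^sub>v m})"
  have finZ: "finite (Z A)" if AF: "A \<in> F" for A
  proof -
    have A: "A \<in> carrier_mat m m" and A0: "A \<noteq> 0\<^sub>m m m" using FA[OF AF] by auto
    obtain i j where i: "i < m" and j: "j < m" and Aij: "A $$ (i,j) \<noteq> 0"
      using nonzero_mat_entry[OF A A0] by blast
    define pA where "pA = (\<Sum>l<m. monom (A $$ (i,l)) l)"
    have "coeff pA j = A $$ (i,j)" unfolding pA_def using j by (simp add: coeff_sum coeff_monom)
    then have pA0: "pA \<noteq> 0" using Aij by auto
    have "Z A \<subseteq> {t. poly pA t = 0}"
    proof
      fix t assume "t \<in> Z A"
      then have "(A *\<^sub>v vt t) $ i = 0" unfolding Z_def using i by simp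
      moreover have "(A *\<^sub>v vt t) $ i = poly pA t"
        using A i unfolding vt_def pA_def by (simp add: poly_sum poly_monom scalar_prod_def row_def atLeast0LessThan)
      ultimately show "t \<in> {t. poly pA t = 0}" by simp
    qed
    then show ?thesis using poly_roots_finite[OF pA0] finite_subset by blast
  qed
  then have "finite (\<Union>A\<in>F. Z A)" using F by blast
  then obtain t where t: "t \<notin> (\<Union>A\<in>F. Z A)"
    using ex_new_if_finite[OF infinite_UNIV_char_0] by blast
  show ?thesis
    by (rule bexI[of _ "vt t"], insert t, auto simp: Z_def vt_def)
qed

lemma finite_monic_divisors: assumes q: "(q :: complex poly) \<noteq> 0"
  shows "finite {g. g dvd q \<and> normalize g = g}"
proof -
  let ?G = "{g. g dvd q \<and> normalize g = g}"
  let ?N = "prime_factorization q"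
  have inj: "inj_on prime_factorization ?G"
  proof (rule inj_onI)
    fix x y assume x: "x \<in> ?G" and y: "y \<in> ?G" and e: "prime_factorization x = prime_factorization y"
    have "x \<noteq> 0" "y \<noteq> 0" using x y q by auto
    then show "x = y" using prod_mset_prime_factorization[of x] prod_mset_prime_factorization[of y] x y e
      by auto
  qed
  have "prime_factorization ` ?G \<subseteq> (\<Union>k\<in>{..size ?N}. multisets_of_size (set_mset ?N) k)"
  proof
    fix M assume "M \<in> prime_factorization ` ?G"
    then obtain g where g: "g \<in> ?G" and M: "M = prime_factorization g" by blast
    have "g \<noteq> 0" using g q by auto
    then have sub: "M \<subseteq># ?N" using g q M prime_factorization_subset_iff_dvd by auto
    then show "M \<in> (\<Union>k\<in>{..size ?N}. multisets_of_size (set_mset ?N) k)"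
      by (auto simp: multisets_of_size_def intro!: set_mset_mono size_mset_mono)
  qed
  moreover have "finite (\<Union>k\<in>{..size ?N}. multisets_of_size (set_mset ?N) k)" by auto
  ultimately have "finite (prime_factorization ` ?G)" using finite_subset by blast
  then show ?thesis using finite_imageD inj by blast
qed



lemma pme_intertwine: assumes A: "A \<in> carrier_mat m m" and B: "B \<in> carrier_mat m m"
  and Y: "Y \<in> carrier_mat m m" and c: "Y * B = A * Y"
  shows "Y * pme m f B = pme m f A * Y"
proof (induct f)
  case 0 then show ?case using A B Y by simp
next
  case (pCons a p)
  have P: "pme m p B \<in> carrier_mat m m" and PA: "pme m p A \<in> carrier_mat m m" using A B by auto
  have "Y * pme m (pCons a p) B = Y * (a \<cdot>\<^sub>m 1\<^sub>m m) + Y * (B * pme m p B)"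
    using B Y P by (simp add: pme_pCons sq_mult_add[of Y m])
  also have "Y * (a \<cdot>\<^sub>m 1\<^sub>m m) = (a \<cdot>\<^sub>m 1\<^sub>m m) * Y"
    using Y by simp
  also have "Y * (B * pme m p B) = A * (pme m p A * Y)"
  proof -
    have "Y * (B * pme m p B) = (Y * B) * pme m p B" using sq_assoc[OF Y B P] by simp
    also have "\<dots> = A * (Y * pme m p B)" using c sq_assoc[OF A Y P] by simp
    also have "\<dots> = A * (pme m p A * Y)" using pCons by simp
    finally show ?thesis .
  qed
  also have "(a \<cdot>\<^sub>m 1\<^sub>m m) * Y + A * (pme m p A * Y) = pme m (pCons a p) A * Y"
    using Y A PA by (simp add: pme_pCons sq_add_mult[of _ m] sq_assoc[OF A PA Y])
  finally show ?case .
qed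

lemma mat_eq_by_vec: assumes A: "(A :: complex mat) \<in> carrier_mat n m" and B: "B \<in> carrier_mat n m"
  and e: "\<And>x. x \<in> carrier_vec m \<Longrightarrow> A *\<^sub>v x = B *\<^sub>v x"
  shows "A = B"
proof (rule eq_matI)
  fix i j assume i: "i < dim_row B" and j: "j < dim_col B"
  have "(A *\<^sub>v unit_vec m j) $ i = (B *\<^sub>v unit_vec m j) $ i" using e[of "unit_vec m j"] by simp
  then show "A $$ (i,j) = B $$ (i,j)" using A B i j by simp
qed (insert A B, auto)

lemma sq_assoc_vec: "A \<in> carrier_mat m m \<Longrightarrow> B \<in> carrier_mat m m \<Longrightarrow> v \<in> carrier_vec m \<Longrightarrow>
  (A * B) *\<^sub>v v = A *\<^sub>v (B *\<^sub>v v)" by (rule assoc_mult_mat_vec)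

lemma pme_vec_zero[simp]: "Q \<in> carrier_mat m m \<Longrightarrow> pme m f Q *\<^sub>v 0\<^sub>v m = 0\<^sub>v m"
  by (rule mult_mat_vec_zero_right) simp

definition cyclic :: "nat \<Rightarrow> complex mat \<Rightarrow> complex vec \<Rightarrow> bool" where
  "cyclic m Q v \<longleftrightarrow> v \<in> carrier_vec m \<and>
     (\<forall>r. (\<forall>k\<ge>m. coeff r k = 0) \<longrightarrow> pme m r Q *\<^sub>v v = 0\<^sub>v m \<longrightarrow> r = 0)"

lemma cyclic_vector_exists:
  assumes Q: "Q \<in> carrier_mat m m" and q0: "q \<noteq> 0" and qQ: "pme m q Q = 0\<^sub>m m m"
    and H: "\<And>r. r \<noteq> 0 \<Longrightarrow> pme m r Q = 0\<^sub>m m m \<Longrightarrow> m \<le> degree r"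
  shows "\<exists>v. cyclic m Q v"
proof -
  define G where "G = {g. g dvd q \<and> normalize g = g \<and> degree g < m}"
  have finG: "finite G" unfolding G_def
    by (rule finite_subset[OF _ finite_monic_divisors[OF q0]]) auto
  have "\<exists>v \<in> carrier_vec m. \<forall>A\<in>(\<lambda>g. pme m g Q) ` G. A *\<^sub>v v \<noteq> 0\<^sub>v m"
  proof (rule avoid_kernels)
    show "finite ((\<lambda>g. pme m g Q) ` G)" using finG by simp
    fix A assume "A \<in> (\<lambda>g. pme m g Q) ` G"
    then obtain g where g: "g \<in> G" and A: "A = pme m g Q" by blast
    have "g \<noteq> 0" using g q0 unfolding G_def by auto
    then have "A \<noteq> 0\<^sub>m m m" using H[of g] g A unfolding G_def by auto
    then show "A \<in> carrier_mat m m \<and> A \<noteq> 0\<^sub>m m m" using A Q by simp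
  qed
  then obtain v where v: "v \<in> carrier_vec m" and vG: "\<And>g. g \<in> G \<Longrightarrow> pme m g Q *\<^sub>v v \<noteq> 0\<^sub>v m"
    by blast
  have "cyclic m Q v" unfolding cyclic_def
  proof (intro conjI allI impI v)
    fix r assume low: "\<forall>k\<ge>m. coeff r k = 0" and rv: "pme m r Q *\<^sub>v v = 0\<^sub>v m"
    show "r = 0"
    proof (rule ccontr)
      assume r0: "r \<noteq> 0"
      then have "coeff r (degree r) \<noteq> 0" by simp
      then have dr: "degree r < m" using low by (meson not_le)
      define g where "g = gcd r q"
      have "degree g \<le> degree r" unfolding g_def using r0 by (simp add: dvd_imp_degree_le)
      then have gG: "g \<in> G" unfolding G_def g_def using dr by auto
      obtain x y where xy: "bezout_coefficients r q = (x, y)" by (cases "bezout_coefficients r q")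
      have gxy: "g = x * r + y * q" using bezout_coefficients[OF xy] unfolding g_def by simp
      have "pme m g Q *\<^sub>v v = pme m x Q *\<^sub>v (pme m r Q *\<^sub>v v) + pme m y Q *\<^sub>v (pme m q Q *\<^sub>v v)"
        using Q v unfolding gxy by (simp add: pme_add pme_mult add_mult_distrib_mat_vec[of _ m m] sq_assoc_vec[where m=m])
      also have "\<dots> = 0\<^sub>v m" using rv qQ Q v by simp
      finally show False using vG[OF gG] by simp
    qed
  qed
  then show ?thesis by blast
qed



lemma cyclic_spans: assumes Q: "Q \<in> carrier_mat m m" and cyc: "cyclic m Q v"
  and x: "x \<in> carrier_vec m"
  shows "\<exists>r. (\<forall>k\<ge>m. coeff r k = 0) \<and> x = pme m r Q *\<^sub>v v"
proof -
  have v: "v \<in> carrier_vec m" and cv: "\<And>r. (\<forall>k\<ge>m. coeff r k = 0) \<Longrightarrow> pme m r Q *\<^sub>v v = 0\<^sub>v m \<Longrightarrow> r = 0"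
    using cyc unfolding cyclic_def by auto
  define K where "K = mat m m (\<lambda>(i,k). (Q ^\<^sub>m k *\<^sub>v v) $ i)"
  define rc where "rc = (\<lambda>c::complex vec. \<Sum>k<m. monom (c $ k) k)"
  have coeff_rc: "coeff (rc c) k = (if k < m then c $ k else 0)" for c k
    unfolding rc_def by (simp add: coeff_sum coeff_monom)
  have low: "\<forall>k\<ge>m. coeff (rc c) k = 0" for c using coeff_rc by simp
  have K: "K \<in> carrier_mat m m" unfolding K_def by simp
  have Kc: "K *\<^sub>v c = pme m (rc c) Q *\<^sub>v v" if c: "c \<in> carrier_vec m" for c
  proof (rule eq_vecI)
    fix i assume "i < dim_vec (pme m (rc c) Q *\<^sub>v v)"
    then have i: "i < m" using Q by simp
    have "(K *\<^sub>v c) $ i = (\<Sum>k<m. (\<Sum>j<m. (Q ^\<^sub>m k) $$ (i,j) * v $ j) * c $ k)"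
      using i c v Q unfolding K_def by (simp add: scalar_prod_def atLeast0LessThan)
    also have "\<dots> = (\<Sum>k<m. \<Sum>j<m. c $ k * (Q ^\<^sub>m k) $$ (i,j) * v $ j)"
      by (simp add: sum_distrib_right sum_distrib_left mult_ac)
    also have "\<dots> = (\<Sum>j<m. \<Sum>k<m. c $ k * (Q ^\<^sub>m k) $$ (i,j) * v $ j)"
      by (rule sum.swap)
    also have "\<dots> = (\<Sum>j<m. pme m (rc c) Q $$ (i,j) * v $ j)"
      by (rule sum.cong, simp, subst pme_index[OF Q i _ low], simp, simp add: coeff_rc sum_distrib_right)
    also have "\<dots> = (pme m (rc c) Q *\<^sub>v v) $ i"
      using i v Q by (simp add: scalar_prod_def atLeast0LessThan)
    finally show "(K *\<^sub>v c) $ i = (pme m (rc c) Q *\<^sub>v v) $ i" .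
  qed (insert K Q, simp)
  have "det K \<noteq> 0"
  proof
    assume "det K = 0"
    then obtain c where c: "c \<in> carrier_vec m" "c \<noteq> 0\<^sub>v m" "K *\<^sub>v c = 0\<^sub>v m"
      using det_0_iff_vec_prod_zero[OF K] by blast
    then have "rc c = 0" using cv[OF low] Kc by simp
    then have "c = 0\<^sub>v m"
      by (intro eq_vecI, insert c(1), auto, metis coeff_rc coeff_0)
    then show False using c by simp
  qed
  from det_non_zero_imp_unit[OF K this, of undefined]
  obtain Ki where Ki: "Ki \<in> carrier_mat m m" "K * Ki = 1\<^sub>m m"
    unfolding Units_def by (auto simp: ring_mat_simps)
  define c where "c = Ki *\<^sub>v x"
  have c: "c \<in> carrier_vec m" unfolding c_def using Ki x by simp
  have "x = K *\<^sub>v c" unfolding c_def using Ki K x by (simp add: assoc_mult_mat_vec[symmetric, OF K Ki(1) x])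
  then show ?thesis using Kc[OF c] low by blast
qed

lemma cyclic_commutant: assumes Q: "Q \<in> carrier_mat m m" and cyc: "cyclic m Q v"
  and X: "X \<in> carrier_mat m m" and c: "X * Q = Q * X"
  shows "\<exists>f. (\<forall>k\<ge>m. coeff f k = 0) \<and> X = pme m f Q"
proof -
  have v: "v \<in> carrier_vec m" using cyc unfolding cyclic_def by auto
  obtain f where f: "\<forall>k\<ge>m. coeff f k = 0" and Xv: "X *\<^sub>v v = pme m f Q *\<^sub>v v"
    using cyclic_spans[OF Q cyc, of "X *\<^sub>v v"] X v by auto
  have "X = pme m f Q"
  proof (rule mat_eq_by_vec[OF X pme_carrier[OF Q]])
    fix x :: "complex vec" assume x: "x \<in> carrier_vec m"
    obtain g where x_eq: "x = pme m g Q *\<^sub>v v"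
      using cyclic_spans[OF Q cyc x] by auto
    have "X *\<^sub>v x = (X * pme m g Q) *\<^sub>v v" using sq_assoc_vec[OF X pme_carrier[OF Q] v] x_eq by simp
    also have "\<dots> = (pme m g Q * X) *\<^sub>v v" using pme_commute[OF Q X c] by simp
    also have "\<dots> = pme m g Q *\<^sub>v (pme m f Q *\<^sub>v v)" using sq_assoc_vec[OF pme_carrier[OF Q] X v] Xv by simp
    also have "\<dots> = (pme m f Q * pme m g Q) *\<^sub>v v" using pme_comm[OF Q, of g f] sq_assoc_vec[OF pme_carrier[OF Q] pme_carrier[OF Q] v, of g f] by simp
    also have "\<dots> = pme m f Q *\<^sub>v x" using x_eq sq_assoc_vec[OF pme_carrier[OF Q] pme_carrier[OF Q] v, of f g] by simp
    finally show "X *\<^sub>v x = pme m f Q *\<^sub>v x" .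
  qed
  then show ?thesis using f by blast
qed



lemma uminus_scalar_prod': assumes "(u :: complex vec) \<in> carrier_vec n" "x \<in> carrier_vec n"
  shows "(- u) \<bullet> x = - (u \<bullet> x)"
  using assms unfolding scalar_prod_def by (simp add: sum_negf)

lemma pme_vec_carrier[simp]: "Q \<in> carrier_mat m m \<Longrightarrow> v \<in> carrier_vec m \<Longrightarrow> pme m f Q *\<^sub>v v \<in> carrier_vec m"
  by (rule mult_mat_vec_carrier[of _ m m]) auto

lemma cyclic_skew_zero: assumes Q: "Q \<in> carrier_mat m m" and Y: "Y \<in> carrier_mat m m"
  and QY: "Q * Y = Y * transpose_mat Q" and sk: "transpose_mat Y = - Y"
  and cyc: "cyclic m (transpose_mat Q) v"
  shows "Y = 0\<^sub>m m m"
proof -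
  let ?T = "transpose_mat Q"
  have T: "?T \<in> carrier_mat m m" using Q by simp
  have v: "v \<in> carrier_vec m" using cyc unfolding cyclic_def by auto
  have inter: "Y * pme m h ?T = pme m h Q * Y" for h
    by (rule pme_intertwine[OF Q T Y QY[symmetric]])
  define s where "s = (\<lambda>g h. (pme m g ?T *\<^sub>v v) \<bullet> (Y *\<^sub>v (pme m h ?T *\<^sub>v v)))"
  have s_eq: "s g h = (pme m (h * g) ?T *\<^sub>v v) \<bullet> (Y *\<^sub>v v)" for g h
  proof -
    have "Y *\<^sub>v (pme m h ?T *\<^sub>v v) = pme m h Q *\<^sub>v (Y *\<^sub>v v)"
      using sq_assoc_vec[OF Y pme_carrier[OF T] v, of h] inter[of h] sq_assoc_vec[OF pme_carrier[OF Q] Y v, of h]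
      by simp
    then have "s g h = (pme m g ?T *\<^sub>v v) \<bullet> (pme m h Q *\<^sub>v (Y *\<^sub>v v))" unfolding s_def by simp
    also have "\<dots> = (transpose_mat (pme m h Q) *\<^sub>v (pme m g ?T *\<^sub>v v)) \<bullet> (Y *\<^sub>v v)"
      by (rule transpose_vec_mult_scalar[symmetric, of _ m m], insert Q Y v T mult_mat_vec_carrier[OF pme_carrier[OF T] v, of g], auto)
    also have "transpose_mat (pme m h Q) = pme m h ?T" using pme_transpose[OF Q] by simp
    also have "pme m h ?T *\<^sub>v (pme m g ?T *\<^sub>v v) = pme m (h * g) ?T *\<^sub>v v"
      using sq_assoc_vec[OF pme_carrier[OF T] pme_carrier[OF T] v, of h g] pme_mult[OF T, of h g] by simp
    finally show ?thesis .
  qed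
  have sym: "s g h = s h g" for g h unfolding s_eq by (simp add: mult.commute)
  have anti: "x \<bullet> (Y *\<^sub>v w) = - (w \<bullet> (Y *\<^sub>v x))" if x: "x \<in> carrier_vec m" and w: "w \<in> carrier_vec m" for x w
  proof -
    have "w \<bullet> (Y *\<^sub>v x) = (transpose_mat Y *\<^sub>v w) \<bullet> x"
      by (rule transpose_vec_mult_scalar[symmetric, OF Y x w])
    also have "\<dots> = - ((Y *\<^sub>v w) \<bullet> x)" using sk Y w x by (simp add: uminus_scalar_prod'[of _ m])
    also have "(Y *\<^sub>v w) \<bullet> x = x \<bullet> (Y *\<^sub>v w)" using Y w x by (simp add: comm_scalar_prod[of _ m])
    finally show ?thesis by simp
  qed
  show ?thesis
  proof (rule eq_matI)
    fix i j assume "i < dim_row (0\<^sub>m m m :: complex mat)" "j < dim_col (0\<^sub>m m m :: complex mat)"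
    then have i: "i < m" and j: "j < m" by auto
    obtain g where g: "unit_vec m i = pme m g ?T *\<^sub>v v" using cyclic_spans[OF T cyc, of "unit_vec m i"] by auto
    obtain h where h: "unit_vec m j = pme m h ?T *\<^sub>v v" using cyclic_spans[OF T cyc, of "unit_vec m j"] by auto
    have "s g h = - s h g" unfolding s_def by (rule anti, insert T v, auto)
    then have "s g h = 0" using sym[of g h] by simp
    moreover have "s g h = Y $$ (i,j)" unfolding s_def g[symmetric] h[symmetric] using Y i j by simp
    ultimately show "Y $$ (i,j) = 0\<^sub>m m m $$ (i,j)" using i j by simp
  qed (insert Y, auto)
qed



lemma J_carrier[simp]: "J_mat p \<in> carrier_mat (2*p) (2*p)"
  unfolding J_mat_def by (simp add: mult_2)

lemma J_dims[simp]: "dim_row (J_mat p) = 2*p" "dim_col (J_mat p) = 2*p"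
  by (metis J_carrier carrier_matD)+

lemma J_index: "i < 2*p \<Longrightarrow> j < 2*p \<Longrightarrow> J_mat p $$ (i,j) =
  (if i < p then (if j < p then 0 else if j - p = i then 1 else 0)
   else (if j < p then (if i - p = j then -1 else 0) else 0))"
  unfolding J_mat_def by (simp add: mult_2)

lemma J_J: "J_mat p * J_mat p = - 1\<^sub>m (2*p)"
proof -
  have "J_mat p * J_mat p = four_block_mat (- 1\<^sub>m p) (0\<^sub>m p p) (0\<^sub>m p p) (- 1\<^sub>m p)"
    unfolding J_mat_def
    by (subst mult_four_block_mat[OF zero_carrier_mat one_carrier_mat uminus_carrier_mat[OF one_carrier_mat] zero_carrier_mat
       zero_carrier_mat one_carrier_mat uminus_carrier_mat[OF one_carrier_mat] zero_carrier_mat], auto)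
  also have "\<dots> = - 1\<^sub>m (2*p)" by (rule eq_matI) (auto simp: mult_2)
  finally show ?thesis .
qed

lemma J_T: "transpose_mat (J_mat p) = - J_mat p"
  unfolding J_mat_def
  by (subst transpose_four_block_mat[OF zero_carrier_mat one_carrier_mat uminus_carrier_mat[OF one_carrier_mat] zero_carrier_mat],
      rule eq_matI, auto)

lemma four_block_eqD: assumes
  c1: "A1 \<in> carrier_mat p p" "A2 \<in> carrier_mat p p" "A3 \<in> carrier_mat p p" "A4 \<in> carrier_mat p p" and
  c2: "B1 \<in> carrier_mat p p" "B2 \<in> carrier_mat p p" "B3 \<in> carrier_mat p p" "B4 \<in> carrier_mat p p" and
  e: "four_block_mat A1 A2 A3 A4 = four_block_mat B1 B2 B3 B4"
  shows "A1 = B1 \<and> A2 = B2 \<and> A3 = B3 \<and> A4 = B4"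
proof -
  have ix: "four_block_mat A1 A2 A3 A4 $$ (i,j) = four_block_mat B1 B2 B3 B4 $$ (i,j)" for i j
    using e by simp
  have "A1 = B1"
  proof (rule eq_matI)
    fix i j assume "i < dim_row B1" "j < dim_col B1"
    then show "A1 $$ (i,j) = B1 $$ (i,j)" using ix[of i j] c1 c2 by simp
  qed (insert c1 c2, auto)
  moreover have "A2 = B2"
  proof (rule eq_matI)
    fix i j assume "i < dim_row B2" "j < dim_col B2"
    then show "A2 $$ (i,j) = B2 $$ (i,j)" using ix[of i "j+p"] c1 c2 by simp
  qed (insert c1 c2, auto)
  moreover have "A3 = B3"
  proof (rule eq_matI)
    fix i j assume "i < dim_row B3" "j < dim_col B3"
    then show "A3 $$ (i,j) = B3 $$ (i,j)" using ix[of "i+p" j] c1 c2 by simp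
  qed (insert c1 c2, auto)
  moreover have "A4 = B4"
  proof (rule eq_matI)
    fix i j assume "i < dim_row B4" "j < dim_col B4"
    then show "A4 $$ (i,j) = B4 $$ (i,j)" using ix[of "i+p" "j+p"] c1 c2 by simp
  qed (insert c1 c2, auto)
  ultimately show ?thesis by blast
qed

lemma minus_zero_eq: assumes "(A :: complex mat) \<in> carrier_mat n m" "B \<in> carrier_mat n m"
  and "A - B = 0\<^sub>m n m" shows "A = B"
proof (rule eq_matI)
  fix i j assume "i < dim_row B" "j < dim_col B"
  then have "(A - B) $$ (i,j) = 0" using assms by simp
  moreover have "(A - B) $$ (i,j) = A $$ (i,j) - B $$ (i,j)" using \<open>i < dim_row B\<close> \<open>j < dim_col B\<close> by simp
  ultimately show "A $$ (i,j) = B $$ (i,j)" by simp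
qed (insert assms, auto)



lemma coeff_sum_monom: "coeff (\<Sum>k<N. monom (c k) k) j = (if j < N then c j else 0)"
  by (simp add: coeff_sum coeff_monom)

lemma lincomb_pows: assumes W: "W \<in> carrier_mat n n" and inj: "inj_on (\<lambda>k. W ^\<^sub>m k) {..<N}"
  shows "module.lincomb (module_mat TYPE(complex) n n) a ((\<lambda>k. W ^\<^sub>m k) ` {..<N}) =
    pme n (\<Sum>k<N. monom (a (W ^\<^sub>m k)) k) W"
proof -
  interpret V: matrix_vs n n "TYPE(complex)" .
  let ?S = "(\<lambda>k. W ^\<^sub>m k) ` {..<N}"
  have S: "?S \<subseteq> carrier_mat n n" using W by auto
  have L: "module.lincomb (module_mat TYPE(complex) n n) a ?S \<in> carrier_mat n n"
    using V.lincomb_closed[OF S] by simp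
  show ?thesis
  proof (rule eq_matI)
    fix i j assume "i < dim_row (pme n (\<Sum>k<N. monom (a (W ^\<^sub>m k)) k) W)"
      "j < dim_col (pme n (\<Sum>k<N. monom (a (W ^\<^sub>m k)) k) W)"
    then have i: "i < n" and j: "j < n" using W by auto
    have "module.lincomb (module_mat TYPE(complex) n n) a ?S $$ (i,j) = (\<Sum>X\<in>?S. a X * X $$ (i,j))"
      by (rule lincomb_index[OF i j S])
    also have "\<dots> = (\<Sum>k<N. a (W ^\<^sub>m k) * (W ^\<^sub>m k) $$ (i,j))"
      by (subst sum.reindex[OF inj], simp)
    also have "\<dots> = pme n (\<Sum>k<N. monom (a (W ^\<^sub>m k)) k) W $$ (i,j)"
      by (subst pme_index[OF W i j, where N=N], auto simp: coeff_sum_monom)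
    finally show "module.lincomb (module_mat TYPE(complex) n n) a ?S $$ (i,j) = 
      pme n (\<Sum>k<N. monom (a (W ^\<^sub>m k)) k) W $$ (i,j)" .
  qed (insert L W, auto)
qed



lemma pme_four_block2: assumes A: "A \<in> carrier_mat p p" and B: "B \<in> carrier_mat p p"
  shows "pme (2*p) f (four_block_mat A (0\<^sub>m p p) (0\<^sub>m p p) B) =
    four_block_mat (pme p f A) (0\<^sub>m p p) (0\<^sub>m p p) (pme p f B)"
  using pme_four_block[OF A B] by (simp add: mult_2)

lemma block_part: assumes Pc: "P \<in> carrier_mat p p" and cycP: "cyclic p P vP"
  and cycT: "cyclic p (transpose_mat P) vT"
  and Xc: "X \<in> carrier_mat (2*p) (2*p)"
  and ham: "J_mat p * X = transpose_mat X * J_mat p"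
  and comm: "X * four_block_mat P (0\<^sub>m p p) (0\<^sub>m p p) (transpose_mat P) =
             four_block_mat P (0\<^sub>m p p) (0\<^sub>m p p) (transpose_mat P) * X"
  shows "\<exists>f. (\<forall>k\<ge>p. coeff f k = 0) \<and> X = pme (2*p) f (four_block_mat P (0\<^sub>m p p) (0\<^sub>m p p) (transpose_mat P))"
proof -
  let ?T = "transpose_mat P"
  have Tc: "?T \<in> carrier_mat p p" using Pc by simp
  obtain X1 X2 X3 X4 where sb: "split_block X p p = (X1,X2,X3,X4)" by (cases "split_block X p p") auto
  have dims: "dim_row X = p + p" "dim_col X = p + p" using Xc by auto
  note spl = split_block[OF sb dims]
  have c1: "X1 \<in> carrier_mat p p" and c2: "X2 \<in> carrier_mat p p" and c3: "X3 \<in> carrier_mat p p"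
    and c4: "X4 \<in> carrier_mat p p" and Xeq: "X = four_block_mat X1 X2 X3 X4" using spl by auto
  have o: "1\<^sub>m p \<in> carrier_mat p p" and z: "0\<^sub>m p p \<in> carrier_mat p p"
    and mo: "- 1\<^sub>m p \<in> carrier_mat p p" by auto
  have JX: "J_mat p * X = four_block_mat X3 X4 (- X1) (- X2)"
    unfolding J_mat_def Xeq
    by (subst mult_four_block_mat[OF z o mo z c1 c2 c3 c4], insert c1 c2 c3 c4, simp)
  have XJ: "transpose_mat X * J_mat p = four_block_mat (- transpose_mat X3) (transpose_mat X1) (- transpose_mat X4) (transpose_mat X2)"
    unfolding J_mat_def Xeq
    by (subst transpose_four_block_mat[OF c1 c2 c3 c4],
        subst mult_four_block_mat[of _ p p, OF _ _ _ _ z o mo z], insert c1 c2 c3 c4, auto)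
  have eqs: "X3 = - transpose_mat X3 \<and> X4 = transpose_mat X1 \<and> - X1 = - transpose_mat X4 \<and> - X2 = transpose_mat X2"
    by (rule four_block_eqD[of _ p], insert c1 c2 c3 c4 JX XJ ham, auto)
  have e4: "X4 = transpose_mat X1" using eqs by blast
  have "transpose_mat X3 = - (- transpose_mat X3)" by simp
  also have "- transpose_mat X3 = X3" using eqs by metis
  finally have s3: "transpose_mat X3 = - X3" .
  have s2: "transpose_mat X2 = - X2" using eqs by metis
  have XD: "X * four_block_mat P (0\<^sub>m p p) (0\<^sub>m p p) ?T = four_block_mat (X1 * P) (X2 * ?T) (X3 * P) (X4 * ?T)"
    unfolding Xeq
    by (subst mult_four_block_mat[OF c1 c2 c3 c4 Pc z z Tc], insert c1 c2 c3 c4 Pc, simp)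
  have DX: "four_block_mat P (0\<^sub>m p p) (0\<^sub>m p p) ?T * X = four_block_mat (P * X1) (P * X2) (?T * X3) (?T * X4)"
    unfolding Xeq
    by (subst mult_four_block_mat[OF Pc z z Tc c1 c2 c3 c4], insert c1 c2 c3 c4 Pc, simp)
  have "X1 * P = P * X1 \<and> X2 * ?T = P * X2 \<and> X3 * P = ?T * X3 \<and> X4 * ?T = ?T * X4"
    by (rule four_block_eqD[of _ p], insert c1 c2 c3 c4 Pc XD DX comm, auto)
  then have m1: "X1 * P = P * X1" and m2: "P * X2 = X2 * ?T" and m3: "?T * X3 = X3 * transpose_mat ?T"
    by auto
  obtain f where f: "\<forall>k\<ge>p. coeff f k = 0" and X1f: "X1 = pme p f P"
    using cyclic_commutant[OF Pc cycP c1 m1] by blast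
  have X2z: "X2 = 0\<^sub>m p p" by (rule cyclic_skew_zero[OF Pc c2 m2 s2 cycT])
  have X3z: "X3 = 0\<^sub>m p p" by (rule cyclic_skew_zero[OF Tc c3 m3 s3], insert cycP, simp)
  have X4f: "X4 = pme p f ?T" using e4 X1f pme_transpose[OF Pc] by simp
  have "X = pme (2*p) f (four_block_mat P (0\<^sub>m p p) (0\<^sub>m p p) ?T)"
    unfolding pme_four_block2[OF Pc Tc] Xeq X1f X2z X3z X4f ..
  then show ?thesis using f by blast
qed



lemma conj_cancel: assumes M: "(M :: complex mat) \<in> carrier_mat n n" and Mi: "Mi \<in> carrier_mat n n" and X: "X \<in> carrier_mat n n"
  and inv: "Mi * M = 1\<^sub>m n"
  shows "Mi * (M * X * Mi) * M = X"
proof -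
  have "Mi * (M * X * Mi) * M = Mi * ((M * X) * (Mi * M))"
    using M Mi X by (simp add: sq_assoc[where m=n])
  also have "(M * X) * (Mi * M) = M * X" using inv right_mult_one_mat[OF sq_mult_carrier[OF M X]] by simp
  also have "Mi * (M * X) = (Mi * M) * X" using M Mi X by (simp add: sq_assoc[where m=n])
  also have "\<dots> = X" using inv X by simp
  finally show ?thesis .
qed

lemma J_J_mult: assumes A: "(A :: complex mat) \<in> carrier_mat (2*p) (2*p)"
  shows "J_mat p * (J_mat p * A) = - A"
proof -
  have "J_mat p * (J_mat p * A) = (J_mat p * J_mat p) * A" using A by (simp add: sq_assoc[where m="2*p"])
  also have "\<dots> = - A" unfolding J_J using A by simp
  finally show ?thesis .
qed

lemma XT_J: assumes A: "(A :: complex mat) \<in> carrier_mat (2*p) (2*p)" and sk: "transpose_mat A = - A"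
  shows "transpose_mat (J_mat p * A) * J_mat p = - A"
proof -
  have "transpose_mat (J_mat p * A) = transpose_mat A * transpose_mat (J_mat p)"
    using A by (simp add: sq_tr_mult[where m="2*p"])
  also have "\<dots> = A * J_mat p" unfolding sk J_T using A by (simp add: carrier_matD)
  finally have "transpose_mat (J_mat p * A) * J_mat p = A * J_mat p * J_mat p" by simp
  also have "\<dots> = A * (J_mat p * J_mat p)" using A by (simp add: sq_assoc[where m="2*p"])
  also have "\<dots> = - A" unfolding J_J using A by simp
  finally show ?thesis .
qed

theorem mainTheorem7:
  fixes p :: nat and B :: "complex mat"
  assumes "B \<in> carrier_mat (2*p) (2*p)"
    and "skew_symmetric B"
    and "regular_skew_ham p (J_mat p * B)"
  shows "{J_mat p * A | A. A \<in> carrier_mat (2*p) (2*p) \<and> skew_symmetric A \<and>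
            (J_mat p * A) * (J_mat p * B) - (J_mat p * B) * (J_mat p * A) = 0\<^sub>m (2*p) (2*p)}
         = LinearCombinations.module.span class_ring (module_mat TYPE(complex) (2*p) (2*p))
             {(J_mat p * B) ^\<^sub>m k | k. k < p}
       \<and> vectorspace.dim class_ring
           ((module_mat TYPE(complex) (2*p) (2*p))
              \<lparr>carrier := LinearCombinations.module.span class_ring (module_mat TYPE(complex) (2*p) (2*p))
                 {(J_mat p * B) ^\<^sub>m k | k. k < p}\<rparr>) = p"
proof -
  let ?n = "2*p"
  let ?J = "J_mat p"
  define W where "W = J_mat p * B"
  have Bc: "B \<in> carrier_mat ?n ?n" using assms(1) .
  have Jc: "?J \<in> carrier_mat ?n ?n" by simp
  have Wc: "W \<in> carrier_mat ?n ?n" unfolding W_def using Bc by simp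
  define D where "D = (\<lambda>P::complex mat. four_block_mat P (0\<^sub>m p p) (0\<^sub>m p p) (transpose_mat P))"
  from assms(3) obtain M Minv P q where ham: "skew_hamiltonian p W" and symp: "symplectic p M"
    and Pc: "P \<in> carrier_mat p p" and sim: "similar_mat_wit W (D P) M Minv"
    and mp: "minimal_polynomial p P q" and dq: "degree q = p"
    unfolding regular_skew_ham_def W_def D_def by blast
  have Dc: "D P \<in> carrier_mat ?n ?n" unfolding D_def using Pc by (simp add: mult_2)
  have Mc: "M \<in> carrier_mat ?n ?n" and Mic: "Minv \<in> carrier_mat ?n ?n"
    and inv1: "M * Minv = 1\<^sub>m ?n" and inv2: "Minv * M = 1\<^sub>m ?n" and Weq: "W = M * D P * Minv"
    using sim Wc unfolding similar_mat_wit_def Let_def by auto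
  have hamW: "?J * W = transpose_mat W * ?J" using ham unfolding skew_hamiltonian_def by simp
  have MJM: "transpose_mat M * ?J * M = ?J" using symp unfolding symplectic_def by simp
  have q0: "q \<noteq> 0" using mp unfolding minimal_polynomial_def by auto
  have qP: "pme p q P = 0\<^sub>m p p" using mp unfolding minimal_polynomial_def by auto
  have HP: "p \<le> degree r" if "r \<noteq> 0" "pme p r P = 0\<^sub>m p p" for r
    using mp that dq unfolding minimal_polynomial_def by auto
  have Tc: "transpose_mat P \<in> carrier_mat p p" using Pc by simp
  have qT: "pme p q (transpose_mat P) = 0\<^sub>m p p" using qP pme_transpose[OF Pc, of q] by simp
  have HT: "p \<le> degree r" if "r \<noteq> 0" "pme p r (transpose_mat P) = 0\<^sub>m p p" for r
  proof -
    have "transpose_mat (pme p r P) = transpose_mat (0\<^sub>m p p)" using that pme_transpose[OF Pc, of r] by simp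
    then have "pme p r P = 0\<^sub>m p p" by (simp only: transpose_mat_eq)
    then show ?thesis using HP that by simp
  qed
  obtain vP where cycP: "cyclic p P vP" using cyclic_vector_exists[OF Pc q0 qP HP] by blast
  obtain vT where cycT: "cyclic p (transpose_mat P) vT" using cyclic_vector_exists[OF Tc q0 qT HT] by blast
  have pmeW: "pme ?n r W = M * pme ?n r (D P) * Minv" for r
    unfolding Weq by (rule pme_similar[OF Mc Mic Dc inv1 inv2])
  have pmeD: "pme ?n r (D P) = four_block_mat (pme p r P) (0\<^sub>m p p) (0\<^sub>m p p) (pme p r (transpose_mat P))" for r
    unfolding D_def by (rule pme_four_block2[OF Pc Tc])
  have indep: "r = 0" if low: "\<forall>k\<ge>p. coeff r k = 0" and z: "pme ?n r W = 0\<^sub>m ?n ?n" for r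
  proof -
    have "pme ?n r (D P) = Minv * (M * pme ?n r (D P) * Minv) * M"
      using conj_cancel[OF Mc Mic pme_carrier[OF Dc] inv2] by simp
    also have "\<dots> = 0\<^sub>m ?n ?n" using z pmeW Mc Mic by simp
    finally have zD: "pme ?n r (D P) = 0\<^sub>m ?n ?n" .
    have "pme p r P = 0\<^sub>m p p"
    proof (rule eq_matI)
      fix i j assume "i < dim_row (0\<^sub>m p p :: complex mat)" "j < dim_col (0\<^sub>m p p :: complex mat)"
      then have i: "i < p" and j: "j < p" by auto
      have "pme ?n r (D P) $$ (i,j) = 0" using zD i j by simp
      then show "pme p r P $$ (i,j) = 0\<^sub>m p p $$ (i,j)" unfolding pmeD using i j Pc by simp
    qed (insert Pc, auto)
    show "r = 0"
    proof (rule ccontr)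
      assume r0: "r \<noteq> 0"
      then have "p \<le> degree r" using HP \<open>pme p r P = 0\<^sub>m p p\<close> by blast
      then have "coeff r (degree r) = 0" using low by simp
      then show False using r0 by simp
    qed
  qed
  have inj: "inj_on (\<lambda>k. W ^\<^sub>m k) {..<p}"
  proof (rule inj_onI, rule ccontr)
    fix i j assume i: "i \<in> {..<p}" and j: "j \<in> {..<p}" and e: "W ^\<^sub>m i = W ^\<^sub>m j" and ij: "i \<noteq> j"
    define r where "r = monom (1::complex) i + monom (-1) j"
    have "coeff r i = 1" unfolding r_def using ij by (simp add: coeff_monom)
    then have r0: "r \<noteq> 0" by auto
    have low: "\<forall>k\<ge>p. coeff r k = 0" unfolding r_def using i j by (auto simp: coeff_monom)
    have "pme ?n r W = 1 \<cdot>\<^sub>m W ^\<^sub>m i + (-1) \<cdot>\<^sub>m W ^\<^sub>m j"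
      unfolding r_def using Wc by (simp add: pme_add pme_monom)
    also have "\<dots> = 0\<^sub>m ?n ?n" unfolding e using Wc by (intro eq_matI) auto
    finally show False using indep[OF low] r0 by simp
  qed
  define S where "S = (\<lambda>k. W ^\<^sub>m k) ` {..<p}"
  have S_eq: "{(J_mat p * B) ^\<^sub>m k | k. k < p} = S" unfolding S_def W_def by auto
  have Sc: "S \<subseteq> carrier_mat ?n ?n" unfolding S_def using Wc by auto
  have finS: "finite S" unfolding S_def by simp
  have cardS: "card S = p" unfolding S_def using card_image[OF inj] by simp
  interpret V: matrix_vs ?n ?n "TYPE(complex)" .
  define R where "R = {pme ?n r W | r. \<forall>k\<ge>p. coeff r k = 0}"
  have spanR: "V.span S = R"
  proof
    show "V.span S \<subseteq> R"
    proof
      fix Y assume "Y \<in> V.span S"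
      then obtain a where "V.lincomb a S = Y" using V.finite_in_span[OF finS Sc] by auto
      then have "Y = pme ?n (\<Sum>k<p. monom (a (W ^\<^sub>m k)) k) W"
        unfolding S_def using lincomb_pows[OF Wc inj] by simp
      then show "Y \<in> R" unfolding R_def by (auto simp: coeff_sum_monom)
    qed
    show "R \<subseteq> V.span S"
    proof
      fix Y assume "Y \<in> R"
      then obtain r where low: "\<forall>k\<ge>p. coeff r k = 0" and Y: "Y = pme ?n r W" unfolding R_def by auto
      define a where "a = (\<lambda>X. coeff r (the_inv_into {..<p} (\<lambda>k. W ^\<^sub>m k) X))"
      have "(\<Sum>k<p. monom (a (W ^\<^sub>m k)) k) = (\<Sum>k<p. monom (coeff r k) k)"
        unfolding a_def by (rule sum.cong, simp, simp add: the_inv_into_f_f[OF inj])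
      also have "\<dots> = r" using poly_as_sum_lt[OF low] by simp
      finally have "V.lincomb a S = Y" unfolding S_def Y using lincomb_pows[OF Wc inj, of a] by simp
      then show "Y \<in> V.span S" unfolding V.span_def using finS by blast
    qed
  qed
  have LHS: "{?J * A | A. A \<in> carrier_mat ?n ?n \<and> skew_symmetric A \<and>
            (?J * A) * (?J * B) - (?J * B) * (?J * A) = 0\<^sub>m ?n ?n} = R"
  proof
    show "R \<subseteq> {?J * A | A. A \<in> carrier_mat ?n ?n \<and> skew_symmetric A \<and>
            (?J * A) * (?J * B) - (?J * B) * (?J * A) = 0\<^sub>m ?n ?n}"
    proof
      fix Y assume "Y \<in> R"
      then obtain r where Y: "Y = pme ?n r W" unfolding R_def by auto
      have Yc: "Y \<in> carrier_mat ?n ?n" unfolding Y using Wc by simp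
      define A where "A = - (?J * Y)"
      have Ac: "A \<in> carrier_mat ?n ?n" unfolding A_def using Yc by simp
      have JA: "?J * A = Y" unfolding A_def using J_J_mult[OF Yc] by simp
      have WTc: "transpose_mat W \<in> carrier_mat ?n ?n" using Wc by simp
      have "?J * Y = pme ?n r (transpose_mat W) * ?J"
        unfolding Y by (rule pme_intertwine[OF WTc Wc Jc hamW])
      then have JY: "?J * Y = transpose_mat Y * ?J" unfolding Y using pme_transpose[OF Wc] by simp
      have "transpose_mat A = - (transpose_mat Y * transpose_mat ?J)"
        unfolding A_def using Yc by (simp add: transpose_uminus sq_tr_mult[where m="?n"])
      also have "\<dots> = transpose_mat Y * ?J" unfolding J_T using Yc by (simp add: carrier_matD)
      also have "\<dots> = - A" unfolding A_def JY[symmetric] by simp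
      finally have skA: "skew_symmetric A" unfolding skew_symmetric_def .
      have "Y * W = W * Y" unfolding Y using pme_commute[OF Wc Wc refl, of r] by simp
      then have "(?J * A) * (?J * B) - (?J * B) * (?J * A) = 0\<^sub>m ?n ?n"
        unfolding JA W_def[symmetric] using Yc Wc by simp
      then show "Y \<in> {?J * A | A. A \<in> carrier_mat ?n ?n \<and> skew_symmetric A \<and>
            (?J * A) * (?J * B) - (?J * B) * (?J * A) = 0\<^sub>m ?n ?n}"
        using Ac skA JA by blast
    qed
    show "{?J * A | A. A \<in> carrier_mat ?n ?n \<and> skew_symmetric A \<and>
            (?J * A) * (?J * B) - (?J * B) * (?J * A) = 0\<^sub>m ?n ?n} \<subseteq> R"
    proof
      fix Y assume "Y \<in> {?J * A | A. A \<in> carrier_mat ?n ?n \<and> skew_symmetric A \<and>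
            (?J * A) * (?J * B) - (?J * B) * (?J * A) = 0\<^sub>m ?n ?n}"
      then obtain A where Ac: "A \<in> carrier_mat ?n ?n" and skA: "transpose_mat A = - A"
        and cm: "(?J * A) * W - W * (?J * A) = 0\<^sub>m ?n ?n" and Y: "Y = ?J * A"
        unfolding skew_symmetric_def W_def by blast
      define X where "X = ?J * A"
      have Xc: "X \<in> carrier_mat ?n ?n" unfolding X_def using Ac by simp
      have XW: "X * W = W * X" by (rule minus_zero_eq[of _ ?n ?n], insert cm Xc Wc, auto simp: X_def)
      have hamX: "?J * X = transpose_mat X * ?J"
        unfolding X_def using J_J_mult[OF Ac] XT_J[OF Ac skA] by simp
      define X' where "X' = Minv * X * M"
      have X'c: "X' \<in> carrier_mat ?n ?n" unfolding X'_def using Mic Xc Mc by simp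
      have canc1: "M * (Minv * Z) = Z" if "Z \<in> carrier_mat ?n ?n" for Z
        using sq_assoc[OF Mc Mic that] inv1 that by simp
      have DW: "D P = Minv * W * M" unfolding Weq using conj_cancel[OF Mc Mic Dc inv2] by simp
      have comm': "X' * D P = D P * X'"
      proof -
        have "X' * D P = Minv * (X * (W * M))"
          unfolding X'_def DW using Mic Xc Mc Wc canc1 by (simp add: sq_assoc[where m="?n"])
        also have "X * (W * M) = W * (X * M)"
          using XW sq_assoc[OF Xc Wc Mc] sq_assoc[OF Wc Xc Mc] by simp
        also have "Minv * (W * (X * M)) = D P * X'"
          unfolding X'_def DW using Mic Xc Mc Wc canc1 by (simp add: sq_assoc[where m="?n"])
        finally show ?thesis .
      qed
      have JMi: "?J * Minv = transpose_mat M * ?J"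
      proof -
        have "transpose_mat M * ?J = transpose_mat M * ?J * (M * Minv)" using inv1 Mc by simp
        also have "\<dots> = (transpose_mat M * ?J * M) * Minv"
          using Mc Mic by (simp add: sq_assoc[where m="?n"])
        also have "\<dots> = ?J * Minv" unfolding MJM ..
        finally show ?thesis by simp
      qed
      have MiJ: "transpose_mat Minv * ?J = ?J * M"
      proof -
        have "transpose_mat (?J * Minv) = transpose_mat (transpose_mat M * ?J)" using JMi by simp
        then have "transpose_mat Minv * transpose_mat ?J = transpose_mat ?J * M"
          using Mc Mic by (simp add: sq_tr_mult[where m="?n"])
        then show ?thesis unfolding J_T using Mc Mic by (simp add: carrier_matD)
      qed
      have ham': "?J * X' = transpose_mat X' * ?J"
      proof -
        have "?J * X' = (?J * Minv) * X * M"
          unfolding X'_def using Mic Xc Mc by (simp add: sq_assoc[where m="?n"])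
        also have "\<dots> = transpose_mat M * (?J * X) * M"
          unfolding JMi using Mic Xc Mc by (simp add: sq_assoc[where m="?n"])
        also have "\<dots> = transpose_mat M * transpose_mat X * (transpose_mat Minv * ?J)"
          unfolding hamX MiJ using Mic Xc Mc by (simp add: sq_assoc[where m="?n"])
        also have "\<dots> = transpose_mat X' * ?J"
          unfolding X'_def using Mic Xc Mc by (simp add: sq_assoc[where m="?n"] sq_tr_mult[where m="?n"])
        finally show ?thesis .
      qed
      obtain f where f: "\<forall>k\<ge>p. coeff f k = 0" and X'f: "X' = pme ?n f (D P)"
        using block_part[OF Pc cycP cycT X'c ham'] comm' unfolding D_def by blast
      have "X = M * X' * Minv" unfolding X'_def using conj_cancel[OF Mic Mc Xc inv1] by simp
      also have "\<dots> = pme ?n f W" unfolding X'f pmeW ..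
      finally show "Y \<in> R" unfolding R_def Y X_def[symmetric] using f by blast
    qed
  qed
  have li: "V.lin_indpt S"
  proof (rule V.finite_lin_indpt2[OF finS Sc])
    fix a :: "complex mat \<Rightarrow> complex" assume "a \<in> S \<rightarrow> UNIV" and z: "V.lincomb a S = 0\<^sub>m ?n ?n"
    then have "pme ?n (\<Sum>k<p. monom (a (W ^\<^sub>m k)) k) W = 0\<^sub>m ?n ?n"
      unfolding S_def using lincomb_pows[OF Wc inj, of a] by simp
    then have r0: "(\<Sum>k<p. monom (a (W ^\<^sub>m k)) k) = 0" by (rule indep[rotated], simp add: coeff_sum_monom)
    show "\<forall>v\<in>S. a v = 0"
    proof
      fix v assume "v \<in> S"
      then obtain k where k: "k < p" and v: "v = W ^\<^sub>m k" unfolding S_def by auto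
      have "coeff (\<Sum>k<p. monom (a (W ^\<^sub>m k)) k) k = a v" using k v by (simp add: coeff_sum_monom)
      then show "a v = 0" using r0 by simp
    qed
  qed
  have "vectorspace.dim class_ring (V.span_vs S) = card S"
    by (rule V.dim_span[OF Sc finS], unfold maximal_def, insert li, auto)
  then show ?thesis using LHS spanR cardS unfolding S_eq W_def by simp
qed

end
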